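(* For $K>K^*:=\frac{b\sigma_1}{b-\mu_0}$ let $G_3(K)=(S(K),I_1(K),0,0,R(K))$ be the unique equilibrium of the system below with $S,I_1,R>0$. Then $K\mapsto R(K)$ and $K\mapsto I_1(K)$ are strictly increasing, $K\mapsto S(K)$ is strictly decreasing, $R(K)\to0$, $I_1(K)\to0$ and $S(K)\to\sigma_1$ as $K\downarrow K^*$, and for all $K>K^*$ $$0<I_1(K)<\frac{\mu_4'-\mu_0}{\alpha_1},\qquad \frac{\mu_1-\mu_4'}{\alpha_1}<S(K)<\frac{\mu_1-\mu_0}{\alpha_1}.$$
   Context: Consider, for $t\ge0$, the system $S'=\big(b(1-\tfrac{N}{K})-\alpha_1I_1-\alpha_2I_2-(\beta_1+\beta_2+\alpha_3)I_{12}-\mu_0\big)S$, $I_1'=\big(b(1-\tfrac{N}{K})+\alpha_1S-\eta_1I_{12}-\gamma_1I_2-\mu_1\big)I_1+\beta_1SI_{12}$, $I_2'=\big(b(1-\tfrac{N}{K})+\alpha_2S-\eta_2I_{12}-\gamma_2I_1-\mu_2\big)I_2+\beta_2SI_{12}$, $I_{12}'=\big(b(1-\tfrac{N}{K})+\alpha_3S+\eta_1I_1+\eta_2I_2-\mu_3\big)I_{12}+(\gamma_1+\gamma_2)I_1I_2$, $R'=\big(b(1-\tfrac{N}{K})-\mu_4'\big)R+\rho_1I_1+\rho_2I_2+\rho_3I_{12}$, where $N=S+I_1+I_2+I_{12}+R$. All parameters $b,K,\alpha_i,\beta_i,\gamma_i,\eta_i,\rho_i,\mu_0,\mu_i'$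 are positive and $\mu_i=\rho_i+\mu_i'$ for $i=1,2,3$; $K$ is regarded as a varying parameter, the others fixed. Standing assumptions: $b>\mu_0$, $b>\mu_i$ ($i=1,2,3$), $b>\mu_4'$, and $\mu_0<\mu_4'<\mu_j'$ for $j=1,2,3$. Set $\sigma_k=(\mu_k-\mu_0)/\alpha_k$ ($k=1,2,3$), assumed to satisfy $\sigma_1<\sigma_2<\sigma_3$, and $S^{**}=\frac{K}{b}(b-\mu_0)$. *)

theory Defs
  imports "HOL-Analysis.Analysis"
begin

record params =
  p_b :: real
  p_alpha1 :: real  p_alpha2 :: real  p_alpha3 :: real
  p_beta1 :: real   p_beta2 :: real
  p_gamma1 :: real  p_gamma2 :: real
  p_eta1 :: real    p_eta2 :: real
  p_rho1 :: real    p_rho2 :: real    p_rho3 :: real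
  p_mu0 :: real
  p_mu1' :: real  p_mu2' :: real  p_mu3' :: real  p_mu4' :: real

definition mu1 :: "params \<Rightarrow> real" where "mu1 p = p_rho1 p + p_mu1' p"
definition mu2 :: "params \<Rightarrow> real" where "mu2 p = p_rho2 p + p_mu2' p"
definition mu3 :: "params \<Rightarrow> real" where "mu3 p = p_rho3 p + p_mu3' p"

definition sigma1 :: "params \<Rightarrow> real" where "sigma1 p = (mu1 p - p_mu0 p) / p_alpha1 p"
definition sigma2 :: "params \<Rightarrow> real" where "sigma2 p = (mu2 p - p_mu0 p) / p_alpha2 p"
definition sigma3 :: "params \<Rightarrow> real" where "sigma3 p = (mu3 p - p_mu0 p) / p_alpha3 p"

definition Kstar :: "params \<Rightarrow> real" where
  "Kstar p = p_b p * sigma1 p / (p_b p - p_mu0 p)"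

definition rhs :: "params \<Rightarrow> real \<Rightarrow> real \<times> real \<times> real \<times> real \<times> real
                    \<Rightarrow> real \<times> real \<times> real \<times> real \<times> real" where
  "rhs p K x = (case x of (S, I1, I2, I12, R) \<Rightarrow>
     (let N = S + I1 + I2 + I12 + R; g = p_b p * (1 - N / K) in
      ( (g - p_alpha1 p * I1 - p_alpha2 p * I2
           - (p_beta1 p + p_beta2 p + p_alpha3 p) * I12 - p_mu0 p) * S,
        (g + p_alpha1 p * S - p_eta1 p * I12 - p_gamma1 p * I2 - mu1 p) * I1 + p_beta1 p * S * I12,
        (g + p_alpha2 p * S - p_eta2 p * I12 - p_gamma2 p * I1 - mu2 p) * I2 + p_beta2 p * S * I12,
        (g + p_alpha3 p * S + p_eta1 p * I1 + p_eta2 p * I2 - mu3 p) * I12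
           + (p_gamma1 p + p_gamma2 p) * I1 * I2,
        (g - p_mu4' p) * R + p_rho1 p * I1 + p_rho2 p * I2 + p_rho3 p * I12)))"

definition equilibrium :: "params \<Rightarrow> real \<Rightarrow> real \<times> real \<times> real \<times> real \<times> real \<Rightarrow> bool" where
  "equilibrium p K x \<longleftrightarrow> rhs p K x = (0, 0, 0, 0, 0)"

definition isG3 :: "params \<Rightarrow> real \<Rightarrow> real \<times> real \<times> real \<times> real \<times> real \<Rightarrow> bool" where
  "isG3 p K x \<longleftrightarrow> equilibrium p K x \<and>
     (\<exists>S I1 R. x = (S, I1, 0, 0, R) \<and> S > 0 \<and> I1 > 0 \<and> R > 0)"

definition G3 :: "params \<Rightarrow> real \<Rightarrow> real \<times> real \<times> real \<times> real \<times> real" where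
  "G3 p K = (THE x. isG3 p K x)"

definition G3_S :: "params \<Rightarrow> real \<Rightarrow> real" where
  "G3_S p K = (case G3 p K of (S, I1, I2, I12, R) \<Rightarrow> S)"
definition G3_I1 :: "params \<Rightarrow> real \<Rightarrow> real" where
  "G3_I1 p K = (case G3 p K of (S, I1, I2, I12, R) \<Rightarrow> I1)"
definition G3_R :: "params \<Rightarrow> real \<Rightarrow> real" where
  "G3_R p K = (case G3 p K of (S, I1, I2, I12, R) \<Rightarrow> R)"

end

theory Submission
  imports Defs
begin

definition ok :: "params \<Rightarrow> bool" where
 "ok p \<longleftrightarrow> 0 < p_alpha1 p \<and> 0 < p_rho1 p \<and> 0 < p_mu0 p \<and> p_mu0 p < p_mu4' p
    \<and> p_mu4' p < p_b p \<and> p_mu4' p < p_mu1' p"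

definition Rf :: "params \<Rightarrow> real \<Rightarrow> real" where
 "Rf p I = p_rho1 p * I / (p_mu4' p - p_mu0 p - p_alpha1 p * I)"
definition Ff :: "params \<Rightarrow> real \<Rightarrow> real" where
 "Ff p I = p_b p * (sigma1 p + Rf p I) / (p_b p - p_mu0 p - p_alpha1 p * I)"
definition cc :: "params \<Rightarrow> real" where
 "cc p = (p_mu4' p - p_mu0 p) / p_alpha1 p"

lemma ok_facts:
  assumes "ok p"
  shows "0 < p_alpha1 p" "0 < p_rho1 p" "0 < p_mu0 p" "p_mu0 p < p_mu4' p"
    "p_mu4' p < p_b p" "p_mu4' p < mu1 p" "0 < sigma1 p" "0 < cc p" "0 < Kstar p"
    "(mu1 p - p_mu4' p) / p_alpha1 p > 0"
proof -
  show a: "0 < p_alpha1 p" "0 < p_rho1 p" "0 < p_mu0 p" "p_mu0 p < p_mu4' p"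
    "p_mu4' p < p_b p" using assms by (auto simp: ok_def)
  show m: "p_mu4' p < mu1 p" using assms by (auto simp: ok_def mu1_def)
  show s: "0 < sigma1 p" using a m by (simp add: sigma1_def)
  show "0 < cc p" using a by (simp add: cc_def)
  show "0 < Kstar p" using a s by (simp add: Kstar_def)
  show "(mu1 p - p_mu4' p) / p_alpha1 p > 0" using a m by simp
qed

lemma den_pos:
  assumes "ok p" "x < cc p"
  shows "p_mu4' p - p_mu0 p - p_alpha1 p * x > 0" "p_b p - p_mu0 p - p_alpha1 p * x > 0"
proof -
  have a: "p_alpha1 p > 0" using ok_facts[OF assms(1)] by simp
  have "p_alpha1 p * x < p_mu4' p - p_mu0 p"
    using assms(2) a unfolding cc_def by (simp add: pos_less_divide_eq mult.commute)
  thus "p_mu4' p - p_mu0 p - p_alpha1 p * x > 0" by simp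
  thus "p_b p - p_mu0 p - p_alpha1 p * x > 0" using ok_facts[OF assms(1)] by simp
qed

lemma Rf_nonneg: assumes "ok p" "0 \<le> x" "x < cc p" shows "0 \<le> Rf p x"
  using den_pos[OF assms(1,3)] ok_facts[OF assms(1)] assms(2) unfolding Rf_def by simp

lemma Rf_pos: assumes "ok p" "0 < x" "x < cc p" shows "0 < Rf p x"
  using den_pos[OF assms(1,3)] ok_facts[OF assms(1)] assms(2) unfolding Rf_def by simp

lemma Rf_mono: assumes "ok p" "0 \<le> x" "x < y" "y < cc p" shows "Rf p x < Rf p y"
proof -
  define d where "d = p_mu4' p - p_mu0 p"
  define a where "a = p_alpha1 p"
  define r where "r = p_rho1 p"
  have dx: "d - a*x > 0" and dy: "d - a*y > 0" using den_pos assms unfolding d_def a_def by auto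
  have r: "r > 0" and d: "d > 0" using ok_facts[OF assms(1)] unfolding r_def d_def by auto
  have "r*x*(d - a*y) < r*y*(d-a*x)"
  proof -
    have "r*x*(d - a*y) - r*y*(d-a*x) = r*d*(x-y)" by (simp add: algebra_simps)
    also have "\<dots> < 0" using r d assms(3) by (simp add: mult_pos_neg)
    finally show ?thesis by simp
  qed
  hence "r*x/(d-a*x) < r*y/(d-a*y)" using dx dy by (simp add: divide_simps)
  thus ?thesis unfolding Rf_def d_def a_def r_def .
qed

lemma Ff_mono: assumes "ok p" "0 \<le> x" "x < y" "y < cc p" shows "Ff p x < Ff p y"
proof -
  define Dx where "Dx = p_b p - p_mu0 p - p_alpha1 p * x"
  define Dy where "Dy = p_b p - p_mu0 p - p_alpha1 p * y"
  define Nx where "Nx = sigma1 p + Rf p x"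
  define Ny where "Ny = sigma1 p + Rf p y"
  have Dy: "Dy > 0" using den_pos assms unfolding Dy_def by auto
  have DD: "Dy < Dx" using ok_facts[OF assms(1)] assms(3) unfolding Dx_def Dy_def by simp
  have Nx: "Nx > 0" using ok_facts[OF assms(1)] Rf_nonneg[OF assms(1,2)] assms unfolding Nx_def by simp
  have NN: "Nx < Ny" using Rf_mono[OF assms] assms(3) unfolding Nx_def Ny_def by simp
  have b: "p_b p > 0" using ok_facts[OF assms(1)] by simp
  have "Nx * Dy < Ny * Dx"
  proof -
    have "Nx * Dy < Nx * Dx" using Nx DD by simp
    also have "\<dots> < Ny * Dx" using NN Dy DD by simp
    finally show ?thesis .
  qed
  hence "Nx / Dx < Ny / Dy" using Dy DD by (simp add: divide_simps)
  hence "p_b p * (Nx / Dx) < p_b p * (Ny / Dy)" using b by (rule mult_strict_left_mono)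
  thus ?thesis unfolding Ff_def Nx_def Ny_def Dx_def Dy_def by (metis times_divide_eq_right)
qed

lemma Ff0: "ok p \<Longrightarrow> Ff p 0 = Kstar p"
  by (simp add: Ff_def Rf_def Kstar_def)

lemma Ff_cont: assumes "ok p" "y < cc p" shows "continuous_on {0..y} (Ff p)"
proof -
  have "\<forall>x\<in>{0..y}. x < cc p" using assms by auto
  hence nz: "\<forall>x\<in>{0..y}. p_mu4' p - p_mu0 p - p_alpha1 p * x \<noteq> 0 \<and> p_b p - p_mu0 p - p_alpha1 p * x \<noteq> 0"
    using den_pos[OF assms(1)] by (metis less_irrefl)
  show ?thesis unfolding Ff_def[abs_def] Rf_def
    by (intro continuous_intros) (use nz in auto)
qed


lemma eqG3:
  "equilibrium p K (S, I, 0, 0, R) \<longleftrightarrow>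
    (let g = p_b p * (1 - (S + I + R) / K) in
     (g - p_alpha1 p * I - p_mu0 p) * S = 0 \<and> (g + p_alpha1 p * S - mu1 p) * I = 0
     \<and> (g - p_mu4' p) * R + p_rho1 p * I = 0)"
  unfolding equilibrium_def rhs_def Let_def by simp

lemma Ff_exists:
  assumes "ok p" "K > Kstar p"
  shows "\<exists>I. 0 < I \<and> I < cc p \<and> Ff p I = K"
proof -
  note f = ok_facts[OF assms(1)]
  define d where "d = p_mu4' p - p_mu0 p"
  define a where "a = p_alpha1 p"
  define r where "r = p_rho1 p"
  define b where "b = p_b p"
  define M where "M = K * (b - p_mu0 p) / b + 1"
  have d: "d > 0" and a: "a > 0" and r: "r > 0" and b: "b > p_mu0 p" "b > 0"
    using f unfolding d_def a_def r_def b_def by auto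
  have K: "K > 0" using f assms by simp
  have M: "M > 1" unfolding M_def using K b by simp
  define y where "y = M * d / (r + M * a)"
  have ra: "r + M*a > 0" using r M a by (simp add: add_pos_pos)
  have y0: "y > 0" unfolding y_def using M d ra by simp
  have "M*d*a < d*(r + M*a)" using d r by (simp add: algebra_simps)
  hence "y * a < d" unfolding y_def using ra by (simp add: divide_simps)
  hence yc: "y < cc p" unfolding cc_def using a by (simp add: pos_less_divide_eq d_def a_def)
  have dy: "d - a*y > 0" using \<open>y*a < d\<close> by (simp add: mult.commute)
  have "r*y = M*(d - a*y)"
  proof -
    have "y*(r + M*a) = M*d" unfolding y_def using ra by simp
    thus ?thesis by (simp add: algebra_simps)
  qed
  hence Ry: "Rf p y = M" unfolding Rf_def using dy by (simp add: d_def[symmetric] a_def[symmetric] r_def[symmetric] divide_simps)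
  have D: "b - p_mu0 p - a*y > 0" using den_pos(2)[OF assms(1) yc] unfolding a_def b_def .
  have D2: "b - p_mu0 p - a*y \<le> b - p_mu0 p" using a y0 by simp
  have N: "sigma1 p + M \<ge> M" using f y0 by simp
  have "K < b * M / (b - p_mu0 p)"
  proof -
    have "b*M/(b - p_mu0 p) = K + b/(b - p_mu0 p)" unfolding M_def using b by (simp add: field_simps)
    thus ?thesis using b by simp
  qed
  also have "\<dots> \<le> b * M / (b - p_mu0 p - a*y)"
    using D D2 M b by (intro divide_left_mono) (auto intro: mult_pos_pos)
  also have "\<dots> \<le> b * (sigma1 p + M) / (b - p_mu0 p - a*y)"
    using D N b by (intro divide_right_mono mult_left_mono) auto
  also have "\<dots> = Ff p y" unfolding Ff_def Ry b_def a_def ..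
  finally have Ky: "K < Ff p y" .
  have "\<exists>x. 0 \<le> x \<and> x \<le> y \<and> Ff p x = K"
    by (rule IVT'[of "Ff p" 0 K y]) (use Ff0[OF assms(1)] assms Ky y0 Ff_cont[OF assms(1) yc] in auto)
  then obtain x where x: "0 \<le> x" "x \<le> y" "Ff p x = K" by blast
  have "x \<noteq> 0" using x Ff0[OF assms(1)] assms(2) by auto
  thus ?thesis using x yc by (intro exI[of _ x]) auto
qed

lemma charG3:
  assumes "ok p" "K > Kstar p"
  shows "isG3 p K x \<longleftrightarrow> (\<exists>I. 0 < I \<and> I < cc p \<and> Ff p I = K \<and> x = (sigma1 p - I, I, 0, 0, Rf p I))"
proof -
  note f = ok_facts[OF assms(1)]
  have K: "K > 0" using f assms by simp
  have as: "p_alpha1 p * sigma1 p = mu1 p - p_mu0 p" using f unfolding sigma1_def by simp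
  show ?thesis
  proof
    assume "isG3 p K x"
    then obtain S I R where x: "x = (S, I, 0, 0, R)" "S > 0" "I > 0" "R > 0"
      and e: "equilibrium p K (S, I, 0, 0, R)" unfolding isG3_def by blast
    define g where "g = p_b p * (1 - (S + I + R) / K)"
    have e1: "(g - p_alpha1 p * I - p_mu0 p) * S = 0" and e2: "(g + p_alpha1 p * S - mu1 p) * I = 0"
      and e5: "(g - p_mu4' p) * R + p_rho1 p * I = 0" using e unfolding eqG3 Let_def g_def by auto
    have g: "g = p_alpha1 p * I + p_mu0 p" using e1 x by simp
    have "g + p_alpha1 p * S = mu1 p" using e2 x by simp
    hence "p_alpha1 p * S = p_alpha1 p * (sigma1 p - I)" using g as by (simp add: algebra_simps)
    hence S: "S = sigma1 p - I" using f by simp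
    have "(p_alpha1 p * I + p_mu0 p - p_mu4' p) * R = - p_rho1 p * I" using e5 g by simp
    moreover have "- p_rho1 p * I < 0" using f x by simp
    ultimately have "(p_alpha1 p * I + p_mu0 p - p_mu4' p) * R < 0" by simp
    hence neg: "p_alpha1 p * I + p_mu0 p - p_mu4' p < 0" using x(4) by (simp add: mult_less_0_iff)
    hence Ic: "I < cc p" unfolding cc_def using f by (simp add: pos_less_divide_eq mult.commute)
    have "(p_mu4' p - p_mu0 p - p_alpha1 p * I) * R = p_rho1 p * I" using e5 g by (simp add: algebra_simps)
    hence R: "R = Rf p I" unfolding Rf_def using neg by (simp add: divide_simps mult.commute)
    have "p_b p * (1 - (S + I + R) / K) = p_alpha1 p * I + p_mu0 p" using g g_def by simp
    hence "p_b p * (S + I + R) / K = p_b p - p_mu0 p - p_alpha1 p * I" by (simp add: algebra_simps)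
    hence "K = p_b p * (S + I + R) / (p_b p - p_mu0 p - p_alpha1 p * I)"
      using K den_pos(2)[OF assms(1) Ic] by (simp add: divide_simps)
    hence "Ff p I = K" unfolding Ff_def S R by simp
    thus "\<exists>I. 0 < I \<and> I < cc p \<and> Ff p I = K \<and> x = (sigma1 p - I, I, 0, 0, Rf p I)"
      using x S R Ic by blast
  next
    assume "\<exists>I. 0 < I \<and> I < cc p \<and> Ff p I = K \<and> x = (sigma1 p - I, I, 0, 0, Rf p I)"
    then obtain I where I: "0 < I" "I < cc p" "Ff p I = K" and x: "x = (sigma1 p - I, I, 0, 0, Rf p I)" by blast
    define D where "D = p_b p - p_mu0 p - p_alpha1 p * I"
    define N where "N = sigma1 p + Rf p I"
    have D: "D > 0" using den_pos(2)[OF assms(1) I(2)] unfolding D_def .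
    have d: "p_mu4' p - p_mu0 p - p_alpha1 p * I > 0" using den_pos(1)[OF assms(1) I(2)] .
    have KN: "K = p_b p * N / D" using I(3) unfolding Ff_def N_def D_def by simp
    have N: "N > 0" using f I Rf_pos[OF assms(1) I(1,2)] unfolding N_def by simp
    have "N / K = D / p_b p" unfolding KN using N D f by (simp add: field_simps)
    hence g: "p_b p * (1 - (sigma1 p - I + I + Rf p I) / K) = p_alpha1 p * I + p_mu0 p"
      unfolding N_def D_def using f by (simp add: field_simps)
    have "cc p < sigma1 p"
      using f unfolding cc_def sigma1_def by (simp add: divide_strict_right_mono)
    hence S: "sigma1 p - I > 0" using I by simp
    have e2: "(p_alpha1 p * I + p_mu0 p + p_alpha1 p * (sigma1 p - I) - mu1 p) * I = 0"
      using as by (simp add: algebra_simps)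
    have e5: "(p_alpha1 p * I + p_mu0 p - p_mu4' p) * Rf p I + p_rho1 p * I = 0"
      unfolding Rf_def using d by (simp add: divide_simps) (simp add: algebra_simps)
    have "equilibrium p K x" unfolding x eqG3 Let_def g using e2 e5 by simp
    thus "isG3 p K x" unfolding isG3_def x using S I Rf_pos[OF assms(1) I(1,2)] by auto
  qed
qed


lemma Ff_inj: assumes "ok p" "0 \<le> x" "x < cc p" "0 \<le> y" "y < cc p" "Ff p x = Ff p y" shows "x = y"
proof (rule ccontr)
  assume "x \<noteq> y"
  hence "x < y \<or> y < x" by linarith
  thus False using Ff_mono[OF assms(1)] assms by (metis less_irrefl)
qed

lemma G3_facts:
  assumes "ok p" "K > Kstar p"
  shows "\<exists>!x. isG3 p K x" "0 < G3_I1 p K" "G3_I1 p K < cc p" "Ff p (G3_I1 p K) = K"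
    "G3_S p K = sigma1 p - G3_I1 p K" "G3_R p K = Rf p (G3_I1 p K)"
proof -
  obtain I where I: "0 < I" "I < cc p" "Ff p I = K" using Ff_exists[OF assms] by blast
  let ?x = "(sigma1 p - I, I, 0::real, 0::real, Rf p I)"
  have ix: "isG3 p K ?x" using charG3[OF assms] I by blast
  have un: "\<And>z. isG3 p K z \<Longrightarrow> z = ?x"
  proof -
    fix z assume "isG3 p K z"
    then obtain J where J: "0 < J" "J < cc p" "Ff p J = K" "z = (sigma1 p - J, J, 0, 0, Rf p J)"
      using charG3[OF assms] by blast
    have "J = I" using Ff_inj[OF assms(1), of J I] I J by simp
    thus "z = ?x" using J by simp
  qed
  show "\<exists>!x. isG3 p K x" using ix un by blast
  have G: "G3 p K = ?x" unfolding G3_def using ix un by (rule the_equality)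
  show "0 < G3_I1 p K" "G3_I1 p K < cc p" "Ff p (G3_I1 p K) = K"
    "G3_S p K = sigma1 p - G3_I1 p K" "G3_R p K = Rf p (G3_I1 p K)"
    using I by (simp_all add: G3_I1_def G3_S_def G3_R_def G)
qed

lemma I_mono: assumes "ok p" "Kstar p < K1" "K1 < K2" shows "G3_I1 p K1 < G3_I1 p K2"
proof (rule ccontr)
  assume "\<not> ?thesis"
  hence le: "G3_I1 p K2 \<le> G3_I1 p K1" by simp
  have k2: "Kstar p < K2" using assms by simp
  note a = G3_facts[OF assms(1,2)] and b = G3_facts[OF assms(1) k2]
  have "Ff p (G3_I1 p K2) \<le> Ff p (G3_I1 p K1)"
  proof (cases "G3_I1 p K2 = G3_I1 p K1")
    case False thus ?thesis using Ff_mono[OF assms(1), of "G3_I1 p K2" "G3_I1 p K1"] le a b by simp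
  qed simp
  thus False using a b assms(3) by simp
qed

lemma I_lim: assumes "ok p" shows "(G3_I1 p \<longlongrightarrow> 0) (at_right (Kstar p))"
proof (rule order_tendstoI)
  fix a :: real assume "a < 0"
  have "eventually (\<lambda>K. K \<in> {Kstar p<..<Kstar p + 1}) (at_right (Kstar p))"
    by (rule eventually_at_right_real) simp
  thus "eventually (\<lambda>K. a < G3_I1 p K) (at_right (Kstar p))"
    by (rule eventually_mono) (use G3_facts(2)[OF assms] \<open>a<0\<close> in force)
next
  fix a :: real assume a: "0 < a"
  define e where "e = min a (cc p / 2)"
  have e: "0 < e" "e < cc p" "e \<le> a" using a ok_facts[OF assms] unfolding e_def by auto
  have "Ff p e > Kstar p" using Ff_mono[OF assms, of 0 e] e Ff0[OF assms] by simp
  hence "eventually (\<lambda>K. K \<in> {Kstar p<..<Ff p e}) (at_right (Kstar p))"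
    by (rule eventually_at_right_real)
  thus "eventually (\<lambda>K. G3_I1 p K < a) (at_right (Kstar p))"
  proof (rule eventually_mono)
    fix K assume K: "K \<in> {Kstar p<..<Ff p e}"
    note g = G3_facts[OF assms, of K]
    show "G3_I1 p K < a"
    proof (rule ccontr)
      assume "\<not> ?thesis"
      hence "e \<le> G3_I1 p K" using e by simp
      hence "Ff p e \<le> Ff p (G3_I1 p K)"
        using Ff_mono[OF assms, of e "G3_I1 p K"] e g K by (cases "e = G3_I1 p K") auto
      thus False using g K by simp
    qed
  qed
qed


theorem mainTheorem9:
  fixes p :: params
  assumes pos: "p_b p > 0" "p_alpha1 p > 0" "p_alpha2 p > 0" "p_alpha3 p > 0"
      "p_beta1 p > 0" "p_beta2 p > 0" "p_gamma1 p > 0" "p_gamma2 p > 0"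
      "p_eta1 p > 0" "p_eta2 p > 0" "p_rho1 p > 0" "p_rho2 p > 0" "p_rho3 p > 0"
      "p_mu0 p > 0" "p_mu1' p > 0" "p_mu2' p > 0" "p_mu3' p > 0" "p_mu4' p > 0"
    and b_gt: "p_b p > p_mu0 p" "p_b p > mu1 p" "p_b p > mu2 p" "p_b p > mu3 p"
      "p_b p > p_mu4' p"
    and mu_ord: "p_mu0 p < p_mu4' p" "p_mu4' p < p_mu1' p" "p_mu4' p < p_mu2' p"
      "p_mu4' p < p_mu3' p"
    and sig: "sigma1 p < sigma2 p" "sigma2 p < sigma3 p"
  shows "(\<forall>K > Kstar p. \<exists>!x. isG3 p K x)
    \<and> strict_mono_on {Kstar p<..} (G3_R p)
    \<and> strict_mono_on {Kstar p<..} (G3_I1 p)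
    \<and> strict_antimono_on {Kstar p<..} (G3_S p)
    \<and> (G3_R p \<longlongrightarrow> 0) (at_right (Kstar p))
    \<and> (G3_I1 p \<longlongrightarrow> 0) (at_right (Kstar p))
    \<and> (G3_S p \<longlongrightarrow> sigma1 p) (at_right (Kstar p))
    \<and> (\<forall>K > Kstar p. 0 < G3_I1 p K \<and> G3_I1 p K < (p_mu4' p - p_mu0 p) / p_alpha1 p
        \<and> (mu1 p - p_mu4' p) / p_alpha1 p < G3_S p K
        \<and> G3_S p K < (mu1 p - p_mu0 p) / p_alpha1 p)"
proof -
  have ok: "ok p" unfolding ok_def using pos b_gt mu_ord by simp
  note f = ok_facts[OF ok]
  have A: "\<forall>K > Kstar p. \<exists>!x. isG3 p K x" using G3_facts(1)[OF ok] by blast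
  have B: "strict_mono_on {Kstar p<..} (G3_R p)"
  proof (rule monotone_onI)
    fix x y assume xy: "x \<in> {Kstar p<..}" "y \<in> {Kstar p<..}" "x < y"
    have "G3_I1 p x < G3_I1 p y" using I_mono[OF ok] xy by simp
    thus "G3_R p x < G3_R p y" using G3_facts[OF ok, of x] G3_facts[OF ok, of y] xy
      Rf_mono[OF ok, of "G3_I1 p x" "G3_I1 p y"] by simp
  qed
  have C: "strict_mono_on {Kstar p<..} (G3_I1 p)"
    by (rule monotone_onI) (use I_mono[OF ok] in simp)
  have D: "strict_antimono_on {Kstar p<..} (G3_S p)"
  proof (rule monotone_onI)
    fix x y assume xy: "x \<in> {Kstar p<..}" "y \<in> {Kstar p<..}" "x < y"
    have "G3_I1 p x < G3_I1 p y" using I_mono[OF ok] xy by simp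
    thus "G3_S p y < G3_S p x" using G3_facts[OF ok, of x] G3_facts[OF ok, of y] xy by simp
  qed
  have ev: "eventually (\<lambda>K. Kstar p < K) (at_right (Kstar p))" by (rule eventually_at_right_less)
  have IL: "(G3_I1 p \<longlongrightarrow> 0) (at_right (Kstar p))" by (rule I_lim[OF ok])
  have d: "p_mu4' p - p_mu0 p - p_alpha1 p * 0 \<noteq> 0" using f by simp
  have "((\<lambda>K. p_rho1 p * G3_I1 p K / (p_mu4' p - p_mu0 p - p_alpha1 p * G3_I1 p K))
       \<longlongrightarrow> p_rho1 p * 0 / (p_mu4' p - p_mu0 p - p_alpha1 p * 0)) (at_right (Kstar p))"
    by (intro tendsto_intros IL d)
  hence "((\<lambda>K. Rf p (G3_I1 p K)) \<longlongrightarrow> 0) (at_right (Kstar p))" unfolding Rf_def by simp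
  hence E: "(G3_R p \<longlongrightarrow> 0) (at_right (Kstar p))"
    by (subst tendsto_cong[OF eventually_mono[OF ev]]) (use G3_facts(6)[OF ok] in auto)
  have "((\<lambda>K. sigma1 p - G3_I1 p K) \<longlongrightarrow> sigma1 p - 0) (at_right (Kstar p))"
    by (intro tendsto_intros IL)
  hence G: "(G3_S p \<longlongrightarrow> sigma1 p) (at_right (Kstar p))"
    by (subst tendsto_cong[OF eventually_mono[OF ev]]) (use G3_facts(5)[OF ok] in auto)
  have H: "\<forall>K > Kstar p. 0 < G3_I1 p K \<and> G3_I1 p K < (p_mu4' p - p_mu0 p) / p_alpha1 p
        \<and> (mu1 p - p_mu4' p) / p_alpha1 p < G3_S p K
        \<and> G3_S p K < (mu1 p - p_mu0 p) / p_alpha1 p"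
  proof (intro allI impI)
    fix K assume K: "K > Kstar p"
    note g = G3_facts[OF ok K]
    have e1: "(mu1 p - p_mu4' p) / p_alpha1 p = sigma1 p - cc p"
      unfolding sigma1_def cc_def using f by (simp add: diff_divide_distrib)
    show "0 < G3_I1 p K \<and> G3_I1 p K < (p_mu4' p - p_mu0 p) / p_alpha1 p
        \<and> (mu1 p - p_mu4' p) / p_alpha1 p < G3_S p K
        \<and> G3_S p K < (mu1 p - p_mu0 p) / p_alpha1 p"
      using g e1 unfolding cc_def[symmetric] sigma1_def[symmetric] by simp
  qed
  show ?thesis using A B C D E IL G H by blast
qed

end
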